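(* Let $\lambda$ be the security parameter, $q$ a modulus, $m,n\in\mathbb{N}$, and let $\mathsf{NMIFE}^{\mathrm{ot}}$ be the scheme for multi-input inner products over $\mathbb{Z}_q$ described in the context. Then $\mathsf{NMIFE}^{\mathrm{ot}}$ is $\mathsf{IND}$-secure; more precisely, for any $\mathsf{PPT}$ adversary $\mathcal{A}$, $$\mathsf{Adv}^{\mathsf{IND}}_{\mathsf{NMIFE}^{\mathrm{ot}},\mathcal{A}}(\lambda)=0 .$$
   Context: Notation: $[n]=\{1,\dots,n\}$. For vectors $\mathbf{y}=(\mathbf{y}_1,\dots,\mathbf{y}_n)\in(\mathbb{Z}_q^m)^n$ let $f_{\mathbf{y}}(\mathbf{x}_1,\dots,\mathbf{x}_n)=\sum_{i\in[n]}\langle \mathbf{x}_i,\mathbf{y}_i\rangle \bmod q$. For $\Delta\in\mathbb{Z}_q$, $\mathcal{D}_\Delta$ denotes the distribution outputting $\Delta$ with probability one. The scheme $\mathsf{NMIFE}^{\mathrm{ot}}$: - $\mathsf{Setup}(1^\lambda,m,n)$: for each $i\in[n]$ sample $\mathsf{ek}_i\leftarrow\mathbb{Z}_q^m$ uniformly; output $\mathsf{msk}=\{(i,\mathsf{ek}_i)\}_{i\in[n]}$. - $\mathsf{Enc}(\mathsf{ek}_i,\mathbf{x}_i)$ for $\mathbf{x}_i\in\mathbb{Z}_q^m$: output $\mathsf{ct}_i=(i,\mathbf{c}_i:=\mathbf{x}_i+\mathsf{ek}_i \bmod q)$. - $\mathsf{KeyGen}(\mathsf{msk},f_{\mathbf{y}},\mathcal{D})$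 for a distribution $\mathcal{D}$ over $\mathbb{Z}_q$: sample $\Delta\leftarrow\mathcal{D}$ and output $\mathsf{dk}_{\mathbf{y}}=(\mathbf{y},z:=\sum_{i\in[n]}\langle \mathsf{ek}_i,\mathbf{y}_i\rangle-\Delta \bmod q)$. - $\mathsf{Dec}(\mathsf{dk}_{\mathbf{y}},\mathsf{ct}_1,\dots,\mathsf{ct}_n)$: output $\sum_{i\in[n]}\langle\mathbf{c}_i,\mathbf{y}_i\rangle-z\bmod q$. Security game $\mathsf{IND}_\beta$ ($\beta\in\{0,1\}$) between adversary $\mathcal{A}$ and challenger: the challenger runs $\mathsf{Setup}(1^\lambda,m,n)$ and chooses the bit $\beta$. $\mathcal{A}$ may adaptively make encryption queries $\mathsf{QEnc}(i,\mathbf{x}_i^0,\mathbf{x}_i^1)$, answered by $\mathsf{Enc}(\mathsf{ek}_i,\mathbf{x}_i^\beta)$, where only one query per slot $i$ is answered (later ones for the same $i$ are ignored), and decryption-key queries $\mathsf{QKeyGen}(f_{\mathbf{y}},\Delta^0,\Delta^1)$ with $\Delta^0,\Delta^1\in\mathbb{Z}_q$, answered by $\mathsf{KeyGen}(\mathsf{msk},f_{\mathbf{y}},\mathcal{D}_{\Delta^\beta})$. Finally $\mathcal{A}$ outputs $\beta'$; if $\mathcal{A}$ was not admissible, $\beta'$ is set to $0$; the game outputs $\beta'$. $\mathcal{A}$ is admissible if (a) whenever some decryption-key query was made, every slot $i\in[n]$ has been queried to $\mathsf{QEnc}$, and (b) for every key query $\mathsf{QKeyGen}(f_{\mathbf{y}},\Delta^0,\Delta^1)$,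 $f_{\mathbf{y}}(\mathbf{x}_1^0,\dots,\mathbf{x}_n^0)+\Delta^0=f_{\mathbf{y}}(\mathbf{x}_1^1,\dots,\mathbf{x}_n^1)+\Delta^1$, where $\mathbf{x}_i^b$ are the answered encryption queries. The advantage is $\mathsf{Adv}^{\mathsf{IND}}_{\mathsf{NMIFE}^{\mathrm{ot}},\mathcal{A}}(\lambda)=|\Pr[\mathsf{IND}_0(\lambda,\mathcal{A})=1]-\Pr[\mathsf{IND}_1(\lambda,\mathcal{A})=1]|$; the scheme is $\mathsf{IND}$-secure if this is negligible for all $\mathsf{PPT}$ $\mathcal{A}$. *)

theory Defs
  imports "HOL-Probability.Probability_Mass_Function" "HOL-Library.FuncSet"
begin

definition Zq :: "int \<Rightarrow> int set" where
  "Zq q = {0..<q}"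

definition Zqm :: "int \<Rightarrow> nat \<Rightarrow> int list set" where
  "Zqm q m = {v. length v = m \<and> set v \<subseteq> Zq q}"

definition ip :: "int list \<Rightarrow> int list \<Rightarrow> int" where
  "ip a b = sum_list (map2 (*) a b)"

definition fy :: "int \<Rightarrow> nat \<Rightarrow> (nat \<Rightarrow> int list) \<Rightarrow> (nat \<Rightarrow> int list) \<Rightarrow> int" where
  "fy q n y x = (\<Sum>i\<in>{1..n}. ip (x i) (y i)) mod q"

definition Setup :: "int \<Rightarrow> nat \<Rightarrow> nat \<Rightarrow> (nat \<Rightarrow> int list) pmf" where
  "Setup q m n = pmf_of_set (PiE {1..n} (\<lambda>_. Zqm q m))"

definition Enc :: "int \<Rightarrow> int list \<Rightarrow> int list \<Rightarrow> int list" where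
  "Enc q ek x = map2 (\<lambda>a b. (a + b) mod q) x ek"

text \<open>KeyGen with the point distribution D_Delta: returns the z-part of dk_y = (y, z).\<close>
definition KeyGenPt :: "int \<Rightarrow> nat \<Rightarrow> (nat \<Rightarrow> int list) \<Rightarrow> (nat \<Rightarrow> int list) \<Rightarrow> int \<Rightarrow> int" where
  "KeyGenPt q n msk y \<Delta> = ((\<Sum>i\<in>{1..n}. ip (msk i) (y i)) - \<Delta>) mod q"

definition Dec :: "int \<Rightarrow> nat \<Rightarrow> (nat \<Rightarrow> int list) \<Rightarrow> int \<Rightarrow> (nat \<Rightarrow> int list) \<Rightarrow> int" where
  "Dec q n y z c = ((\<Sum>i\<in>{1..n}. ip (c i) (y i)) - z) mod q"

text \<open>A deterministic adaptive adversary strategy: either outputs its guess, or makes an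
encryption query QEnc(i, x^0, x^1) and continues depending on the answer (None if the
query is ignored, Some c_i otherwise), or makes a key query QKeyGen(f_y, Delta^0, Delta^1)
and continues depending on the returned z. A (randomized) adversary is a probability
distribution over such strategies (its random coins).\<close>

datatype adv =
    Guess bool
  | AEnc nat "int list" "int list" "int list option \<Rightarrow> adv"
  | AKey "nat \<Rightarrow> int list" int int "int \<Rightarrow> adv"

definition sel :: "bool \<Rightarrow> 'a \<Rightarrow> 'a \<Rightarrow> 'a" where
  "sel \<beta> a0 a1 = (if \<beta> then a1 else a0)"

text \<open>State: answered encryption queries E (slot \<mapsto> (x^0,x^1)),
list K of key queries (y, Delta^0, Delta^1), and a flag ok recording that all queries were
well-typed (slot in [n], vectors in Z_q^m, Delta's in Z_q).\<close>
primrec run :: "int \<Rightarrow> nat \<Rightarrow> nat \<Rightarrow> (nat \<Rightarrow> int list) \<Rightarrow> bool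
    \<Rightarrow> (nat \<Rightarrow> (int list \<times> int list) option) \<Rightarrow> ((nat \<Rightarrow> int list) \<times> int \<times> int) list \<Rightarrow> bool
    \<Rightarrow> adv \<Rightarrow> bool \<times> (nat \<Rightarrow> (int list \<times> int list) option) \<times> ((nat \<Rightarrow> int list) \<times> int \<times> int) list \<times> bool"
where
  "run q m n msk \<beta> E K ok (Guess b) = (b, E, K, ok)"
| "run q m n msk \<beta> E K ok (AEnc i x0 x1 k) =
     (let ok' = (ok \<and> i \<in> {1..n} \<and> x0 \<in> Zqm q m \<and> x1 \<in> Zqm q m) in
      if E i = None
      then run q m n msk \<beta> (E(i := Some (x0, x1))) K ok' (k (Some (Enc q (msk i) (sel \<beta> x0 x1))))
      else run q m n msk \<beta> E K ok' (k None))"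
| "run q m n msk \<beta> E K ok (AKey y d0 d1 k) =
     (let ok' = (ok \<and> (\<forall>i\<in>{1..n}. y i \<in> Zqm q m) \<and> d0 \<in> Zq q \<and> d1 \<in> Zq q) in
      run q m n msk \<beta> E (K @ [(y, d0, d1)]) ok' (k (KeyGenPt q n msk y (sel \<beta> d0 d1))))"

definition admissible :: "int \<Rightarrow> nat \<Rightarrow> (nat \<Rightarrow> (int list \<times> int list) option)
    \<Rightarrow> ((nat \<Rightarrow> int list) \<times> int \<times> int) list \<Rightarrow> bool \<Rightarrow> bool" where
  "admissible q n E K ok \<longleftrightarrow> ok
     \<and> (K \<noteq> [] \<longrightarrow> (\<forall>i\<in>{1..n}. E i \<noteq> None))
     \<and> (\<forall>(y, d0, d1)\<in>set K.
          (fy q n y (\<lambda>i. fst (the (E i))) + d0) mod q = (fy q n y (\<lambda>i. snd (the (E i))) + d1) mod q)"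

text \<open>The game IND_beta; False encodes beta = 0, True encodes beta = 1. Output: beta'.\<close>
definition IND :: "int \<Rightarrow> nat \<Rightarrow> nat \<Rightarrow> bool \<Rightarrow> adv pmf \<Rightarrow> bool pmf" where
  "IND q m n \<beta> A = do {
     a \<leftarrow> A;
     msk \<leftarrow> Setup q m n;
     let (b, E, K, ok) = run q m n msk \<beta> (\<lambda>_. None) [] True a;
     return_pmf (admissible q n E K ok \<and> b)
   }"

definition Adv_IND :: "int \<Rightarrow> nat \<Rightarrow> nat \<Rightarrow> adv pmf \<Rightarrow> real" where
  "Adv_IND q m n A = \<bar>pmf (IND q m n False A) True - pmf (IND q m n True A) True\<bar>"

end

theory Submission
  imports Defs
begin

definition goodE :: "int \<Rightarrow> nat \<Rightarrow> nat \<Rightarrow> (nat \<Rightarrow> (int list \<times> int list) option) \<Rightarrow> bool" where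
  "goodE q m n E = (\<forall>i p. E i = Some p \<longrightarrow> i \<in> {1..n} \<and> fst p \<in> Zqm q m \<and> snd p \<in> Zqm q m)"

definition goodK :: "int \<Rightarrow> nat \<Rightarrow> nat \<Rightarrow> ((nat \<Rightarrow> int list) \<times> int \<times> int) list \<Rightarrow> bool" where
  "goodK q m n K = (\<forall>(y,d0,d1)\<in>set K. (\<forall>i\<in>{1..n}. y i \<in> Zqm q m) \<and> d0 \<in> Zq q \<and> d1 \<in> Zq q)"

lemma run_mono:
  "run q m n msk \<beta> E K ok a = (b, Ef, Kf, okf) \<Longrightarrow>
     (\<forall>i. E i \<noteq> None \<longrightarrow> Ef i = E i) \<and> set K \<subseteq> set Kf \<and> (okf \<longrightarrow> ok)"
proof (induction a arbitrary: E K ok)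
  case (Guess x)
  then show ?case by simp
next
  case (AEnc i x0 x1 k)
  show ?case
  proof (cases "E i = None")
    case True
    with AEnc.prems have "run q m n msk \<beta> (E(i := Some (x0, x1))) K (ok \<and> i \<in> {1..n} \<and> x0 \<in> Zqm q m \<and> x1 \<in> Zqm q m)
       (k (Some (Enc q (msk i) (sel \<beta> x0 x1)))) = (b, Ef, Kf, okf)" by (simp add: Let_def)
    from AEnc.IH[OF rangeI this] True show ?thesis by (auto split: if_splits)
  next
    case False
    with AEnc.prems have "run q m n msk \<beta> E K (ok \<and> i \<in> {1..n} \<and> x0 \<in> Zqm q m \<and> x1 \<in> Zqm q m)
       (k None) = (b, Ef, Kf, okf)" by (simp add: Let_def)
    from AEnc.IH[OF rangeI this] show ?thesis by auto
  qed
next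
  case (AKey y d0 d1 k)
  from AKey.prems have "run q m n msk \<beta> E (K @ [(y, d0, d1)]) (ok \<and> (\<forall>i\<in>{1..n}. y i \<in> Zqm q m) \<and> d0 \<in> Zq q \<and> d1 \<in> Zq q)
      (k (KeyGenPt q n msk y (sel \<beta> d0 d1))) = (b, Ef, Kf, okf)" by (simp add: Let_def)
  from AKey.IH[OF rangeI this] show ?case by auto
qed

lemma run_good:
  "run q m n msk \<beta> E K ok a = (b, Ef, Kf, okf) \<Longrightarrow> okf \<Longrightarrow> goodE q m n E \<Longrightarrow> goodK q m n K \<Longrightarrow>
     goodE q m n Ef \<and> goodK q m n Kf"
proof (induction a arbitrary: E K ok)
  case (Guess x)
  then show ?case by simp
next
  case (AEnc i x0 x1 k)
  show ?case
  proof (cases "E i = None")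
    case True
    with AEnc.prems have r: "run q m n msk \<beta> (E(i := Some (x0, x1))) K (ok \<and> i \<in> {1..n} \<and> x0 \<in> Zqm q m \<and> x1 \<in> Zqm q m)
       (k (Some (Enc q (msk i) (sel \<beta> x0 x1)))) = (b, Ef, Kf, okf)" by (simp add: Let_def)
    have "i \<in> {1..n} \<and> x0 \<in> Zqm q m \<and> x1 \<in> Zqm q m" using run_mono[OF r] AEnc.prems by auto
    hence "goodE q m n (E(i := Some (x0, x1)))" using AEnc.prems unfolding goodE_def by auto
    from AEnc.IH[OF rangeI r AEnc.prems(2) this AEnc.prems(4)] show ?thesis .
  next
    case False
    with AEnc.prems have "run q m n msk \<beta> E K (ok \<and> i \<in> {1..n} \<and> x0 \<in> Zqm q m \<and> x1 \<in> Zqm q m)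
       (k None) = (b, Ef, Kf, okf)" by (simp add: Let_def)
    from AEnc.IH[OF rangeI this AEnc.prems(2-4)] show ?thesis .
  qed
next
  case (AKey y d0 d1 k)
  from AKey.prems have r: "run q m n msk \<beta> E (K @ [(y, d0, d1)]) (ok \<and> (\<forall>i\<in>{1..n}. y i \<in> Zqm q m) \<and> d0 \<in> Zq q \<and> d1 \<in> Zq q)
      (k (KeyGenPt q n msk y (sel \<beta> d0 d1))) = (b, Ef, Kf, okf)" by (simp add: Let_def)
  have "(\<forall>i\<in>{1..n}. y i \<in> Zqm q m) \<and> d0 \<in> Zq q \<and> d1 \<in> Zq q" using run_mono[OF r] AKey.prems by auto
  hence "goodK q m n (K @ [(y, d0, d1)])" using AKey.prems unfolding goodK_def by auto
  from AKey.IH[OF rangeI r AKey.prems(2,3) this] show ?case .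
qed

lemma run_sim:
  assumes H1: "\<And>i x0 x1. Ef i = Some (x0, x1) \<Longrightarrow> Enc q (msk' i) (sel \<beta>' x0 x1) = Enc q (msk i) (sel \<beta> x0 x1)"
    and H2: "\<And>y d0 d1. (y, d0, d1) \<in> set Kf \<Longrightarrow> KeyGenPt q n msk' y (sel \<beta>' d0 d1) = KeyGenPt q n msk y (sel \<beta> d0 d1)"
  shows "run q m n msk \<beta> E K ok a = (b, Ef, Kf, okf) \<Longrightarrow> run q m n msk' \<beta>' E K ok a = (b, Ef, Kf, okf)"
proof (induction a arbitrary: E K ok)
  case (Guess x)
  then show ?case by simp
next
  case (AEnc i x0 x1 k)
  show ?case
  proof (cases "E i = None")
    case True
    with AEnc.prems have r: "run q m n msk \<beta> (E(i := Some (x0, x1))) K (ok \<and> i \<in> {1..n} \<and> x0 \<in> Zqm q m \<and> x1 \<in> Zqm q m)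
       (k (Some (Enc q (msk i) (sel \<beta> x0 x1)))) = (b, Ef, Kf, okf)" by (simp add: Let_def)
    have "Ef i = Some (x0, x1)" using run_mono[OF r] by auto
    note e = H1[OF this]
    note s = AEnc.IH[OF rangeI r]
    show ?thesis using True s by (simp only: run.simps Let_def e if_True simp_thms)
  next
    case False
    with AEnc.prems have "run q m n msk \<beta> E K (ok \<and> i \<in> {1..n} \<and> x0 \<in> Zqm q m \<and> x1 \<in> Zqm q m)
       (k None) = (b, Ef, Kf, okf)" by (simp add: Let_def)
    note s = AEnc.IH[OF rangeI this]
    show ?thesis using False s by (simp only: run.simps Let_def if_False simp_thms)
  qed
next
  case (AKey y d0 d1 k)
  from AKey.prems have r: "run q m n msk \<beta> E (K @ [(y, d0, d1)]) (ok \<and> (\<forall>i\<in>{1..n}. y i \<in> Zqm q m) \<and> d0 \<in> Zq q \<and> d1 \<in> Zq q)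
      (k (KeyGenPt q n msk y (sel \<beta> d0 d1))) = (b, Ef, Kf, okf)" by (simp add: Let_def)
  have "(y, d0, d1) \<in> set Kf" using run_mono[OF r] by auto
  from AKey.IH[OF rangeI r] H2[OF this] show ?case by (simp add: Let_def)
qed

definition vshift :: "int \<Rightarrow> nat \<Rightarrow> int list \<Rightarrow> int list \<Rightarrow> int list \<Rightarrow> int list" where
  "vshift q m e u v = map (\<lambda>j. (e!j + u!j - v!j) mod q) [0..<m]"

lemma Zqm_iff: "x \<in> Zqm q m \<longleftrightarrow> length x = m \<and> (\<forall>j<m. 0 \<le> x!j \<and> x!j < q)"
  unfolding Zqm_def Zq_def by (auto simp: in_set_conv_nth subset_iff)

lemma vshift_in: "0 < q \<Longrightarrow> vshift q m e u v \<in> Zqm q m"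
  unfolding Zqm_iff vshift_def by auto

lemma Enc_nth: "length x = m \<Longrightarrow> length e = m \<Longrightarrow> Enc q e x = map (\<lambda>j. (x!j + e!j) mod q) [0..<m]"
  unfolding Enc_def by (auto intro!: nth_equalityI)

lemma Enc_vshift: "e \<in> Zqm q m \<Longrightarrow> u \<in> Zqm q m \<Longrightarrow> v \<in> Zqm q m \<Longrightarrow>
   Enc q (vshift q m e u v) v = Enc q e u"
proof -
  assume a: "e \<in> Zqm q m" "u \<in> Zqm q m" "v \<in> Zqm q m"
  have "Enc q (vshift q m e u v) v = map (\<lambda>j. (v!j + (e!j + u!j - v!j) mod q) mod q) [0..<m]"
    using a by (subst Enc_nth) (auto simp: Zqm_iff vshift_def)
  also have "\<dots> = map (\<lambda>j. (u!j + e!j) mod q) [0..<m]"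
    by (auto simp: mod_simps add.commute)
  also have "\<dots> = Enc q e u" using a by (subst Enc_nth) (auto simp: Zqm_iff)
  finally show ?thesis .
qed

lemma mod_shift_back: "((x + u - v) mod (q::int) + v - u) mod q = x mod q"
proof -
  have "((x + u - v) mod q + v - u) mod q = ((x + u - v) mod q + (v - u)) mod q" by (simp add: algebra_simps)
  also have "\<dots> = ((x + u - v) + (v - u)) mod q" by (rule mod_add_left_eq)
  finally show ?thesis by simp
qed

lemma vshift_inv: "0 < q \<Longrightarrow> e \<in> Zqm q m \<Longrightarrow> vshift q m (vshift q m e u v) v u = e"
  unfolding vshift_def
  by (rule nth_equalityI) (auto simp: Zqm_iff mod_shift_back)

lemma ip_sum: "length a = m \<Longrightarrow> length b = m \<Longrightarrow> ip a b = (\<Sum>j<m. a!j * b!j)"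
  unfolding ip_def by (simp add: sum_list_sum_nth atLeast0LessThan)

lemma ip_vshift: "length e = m \<Longrightarrow> length u = m \<Longrightarrow> length v = m \<Longrightarrow> length y = m \<Longrightarrow>
  ip (vshift q m e u v) y mod q = (ip e y + ip u y - ip v y) mod q"
proof -
  assume a: "length e = m" "length u = m" "length v = m" "length y = m"
  have "ip (vshift q m e u v) y mod q = (\<Sum>j<m. ((e!j + u!j - v!j) mod q) * y!j) mod q"
    using a by (simp add: ip_sum vshift_def)
  also have "\<dots> = (\<Sum>j<m. ((e!j + u!j - v!j) mod q) * y!j mod q) mod q"
    by (simp add: mod_sum_eq)
  also have "\<dots> = (\<Sum>j<m. (e!j + u!j - v!j) * y!j mod q) mod q"
    by (simp add: mod_mult_left_eq)
  also have "\<dots> = (\<Sum>j<m. (e!j + u!j - v!j) * y!j) mod q"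
    by (simp add: mod_sum_eq)
  also have "(\<Sum>j<m. (e!j + u!j - v!j) * y!j) = ip e y + ip u y - ip v y"
    using a by (simp add: ip_sum algebra_simps sum.distrib sum_subtractf)
  finally show ?thesis .
qed

definition phi :: "int \<Rightarrow> nat \<Rightarrow> nat \<Rightarrow> bool \<Rightarrow> (nat \<Rightarrow> (int list \<times> int list) option) \<Rightarrow> (nat \<Rightarrow> int list) \<Rightarrow> (nat \<Rightarrow> int list)" where
  "phi q m n \<beta> Ef msk = (\<lambda>i. if i \<in> {1..n} then (case Ef i of None \<Rightarrow> msk i
      | Some p \<Rightarrow> vshift q m (msk i) (sel \<beta> (fst p) (snd p)) (sel (\<not>\<beta>) (fst p) (snd p))) else undefined)"

lemma phi_out: "i \<notin> {1..n} \<Longrightarrow> phi q m n \<beta> Ef msk i = undefined"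
  unfolding phi_def by (rule if_not_P)

lemma phi_in: "i \<in> {1..n} \<Longrightarrow> phi q m n \<beta> Ef msk i = (case Ef i of None \<Rightarrow> msk i
      | Some p \<Rightarrow> vshift q m (msk i) (sel \<beta> (fst p) (snd p)) (sel (\<not>\<beta>) (fst p) (snd p)))"
  unfolding phi_def by (rule if_P)

lemma arith_key:
  fixes A E U V dU dV q :: int
  assumes "A mod q = (E + U - V) mod q" "(U mod q + dU) mod q = (V mod q + dV) mod q"
  shows "(A - dV) mod q = (E - dU) mod q"
proof -
  have 1: "q dvd A - (E + U - V)" using assms(1) by (simp add: mod_eq_dvd_iff)
  have "(U + dU) mod q = (V + dV) mod q" using assms(2) by (simp add: mod_simps)
  hence 2: "q dvd (U + dU) - (V + dV)" by (simp add: mod_eq_dvd_iff)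
  have "q dvd (A - (E + U - V)) + ((U + dU) - (V + dV))" using 1 2 by (rule dvd_add)
  hence "q dvd (A - dV) - (E - dU)" by (simp add: algebra_simps)
  thus ?thesis by (simp add: mod_eq_dvd_iff)
qed

lemma sel_in: "x0 \<in> X \<Longrightarrow> x1 \<in> X \<Longrightarrow> sel b x0 x1 \<in> X"
  by (simp add: sel_def)

lemma key:
  assumes q: "0 < q" and msk: "msk \<in> PiE {1..n} (\<lambda>_. Zqm q m)"
    and r: "run q m n msk \<beta> (\<lambda>_. None) [] True a = (b, Ef, Kf, okf)"
    and adm: "admissible q n Ef Kf okf"
  shows "phi q m n \<beta> Ef msk \<in> PiE {1..n} (\<lambda>_. Zqm q m) \<and>
         run q m n (phi q m n \<beta> Ef msk) (\<not>\<beta>) (\<lambda>_. None) [] True a = (b, Ef, Kf, okf) \<and>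
         phi q m n (\<not>\<beta>) Ef (phi q m n \<beta> Ef msk) = msk"
proof (intro conjI)
  have okf: okf using adm by (simp add: admissible_def)
  have "goodE q m n Ef \<and> goodK q m n Kf"
    by (rule run_good[OF r okf]) (auto simp: goodE_def goodK_def)
  hence ge: "goodE q m n Ef" and gk: "goodK q m n Kf" by auto
  have mi: "msk i \<in> Zqm q m" if "i \<in> {1..n}" for i using msk that by (auto simp: PiE_iff)
  show "phi q m n \<beta> Ef msk \<in> PiE {1..n} (\<lambda>_. Zqm q m)"
  proof (rule PiE_I)
    fix i assume i: "i \<in> {1..n}"
    show "phi q m n \<beta> Ef msk i \<in> Zqm q m"
    proof (cases "Ef i")
      case None
      then show ?thesis using i mi[OF i] by (simp add: phi_def)
    next
      case (Some p)
      then show ?thesis using i vshift_in[OF q] by (simp add: phi_def)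
    qed
  next
    fix i assume ni: "i \<notin> {1..n}"
    show "phi q m n \<beta> Ef msk i = undefined" unfolding phi_def using ni by (rule if_not_P)
  qed
  show "phi q m n (\<not>\<beta>) Ef (phi q m n \<beta> Ef msk) = msk"
  proof
    fix i
    show "phi q m n (\<not>\<beta>) Ef (phi q m n \<beta> Ef msk) i = msk i"
    proof (cases "i \<in> {1..n}")
      case False
      then show ?thesis using PiE_arb[OF msk False] phi_out[OF False] by metis
    next
      case i: True
      show ?thesis
      proof (cases "Ef i")
        case None
        then show ?thesis using i by (simp add: phi_in)
      next
        case (Some p)
        then show ?thesis using i vshift_inv[OF q mi[OF i]] by (simp add: phi_in)
      qed
    qed
  qed
  let ?M = "phi q m n \<beta> Ef msk"
  show "run q m n ?M (\<not>\<beta>) (\<lambda>_. None) [] True a = (b, Ef, Kf, okf)"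
  proof (rule run_sim[OF _ _ r])
    fix i x0 x1
    assume e: "Ef i = Some (x0, x1)"
    hence i: "i \<in> {1..n}" and x: "x0 \<in> Zqm q m" "x1 \<in> Zqm q m" using ge by (auto simp: goodE_def)
    have "?M i = vshift q m (msk i) (sel \<beta> x0 x1) (sel (\<not>\<beta>) x0 x1)" using e i by (simp add: phi_def)
    thus "Enc q (?M i) (sel (\<not>\<beta>) x0 x1) = Enc q (msk i) (sel \<beta> x0 x1)"
      using Enc_vshift[OF mi[OF i] sel_in[OF x] sel_in[OF x]] by simp
  next
    fix y d0 d1
    assume yk: "(y, d0, d1) \<in> set Kf"
    hence "Kf \<noteq> []" by auto
    hence allq: "\<forall>i\<in>{1..n}. Ef i \<noteq> None" using adm by (simp add: admissible_def)
    have eq: "(fy q n y (\<lambda>i. fst (the (Ef i))) + d0) mod q = (fy q n y (\<lambda>i. snd (the (Ef i))) + d1) mod q"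
      using adm yk unfolding admissible_def by fastforce
    have yi: "y i \<in> Zqm q m" if "i \<in> {1..n}" for i using gk yk that unfolding goodK_def by fastforce
    define X0 where "X0 = (\<lambda>i. fst (the (Ef i)))"
    define X1 where "X1 = (\<lambda>i. snd (the (Ef i)))"
    have X: "X0 i \<in> Zqm q m \<and> X1 i \<in> Zqm q m \<and> Ef i = Some (X0 i, X1 i)" if "i \<in> {1..n}" for i
      using allq that ge unfolding X0_def X1_def goodE_def by fastforce
    have Mi: "?M i = vshift q m (msk i) (sel \<beta> (X0 i) (X1 i)) (sel (\<not>\<beta>) (X0 i) (X1 i))" if "i \<in> {1..n}" for i
      using X[OF that] that by (simp add: phi_def)
    have "(\<Sum>i\<in>{1..n}. ip (?M i) (y i)) mod q = (\<Sum>i\<in>{1..n}. ip (?M i) (y i) mod q) mod q"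
      by (simp add: mod_sum_eq)
    also have "\<dots> = (\<Sum>i\<in>{1..n}. (ip (msk i) (y i) + ip (sel \<beta> (X0 i) (X1 i)) (y i) - ip (sel (\<not>\<beta>) (X0 i) (X1 i)) (y i)) mod q) mod q"
    proof (rule arg_cong[where f = "\<lambda>x. x mod q"], rule sum.cong[OF refl])
      fix i assume i: "i \<in> {1..n}"
      have l: "length (msk i) = m" "length (y i) = m" "length (X0 i) = m" "length (X1 i) = m"
        using mi[OF i] yi[OF i] X[OF i] by (auto simp: Zqm_def)
      have "length (sel \<beta> (X0 i) (X1 i)) = m" "length (sel (\<not>\<beta>) (X0 i) (X1 i)) = m"
        using l by (auto simp: sel_def)
      with l show "ip (?M i) (y i) mod q = (ip (msk i) (y i) + ip (sel \<beta> (X0 i) (X1 i)) (y i) - ip (sel (\<not>\<beta>) (X0 i) (X1 i)) (y i)) mod q"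
        using Mi[OF i] ip_vshift by simp
    qed
    also have "\<dots> = (\<Sum>i\<in>{1..n}. (ip (msk i) (y i) + ip (sel \<beta> (X0 i) (X1 i)) (y i) - ip (sel (\<not>\<beta>) (X0 i) (X1 i)) (y i))) mod q"
      by (simp add: mod_sum_eq)
    also have "(\<Sum>i\<in>{1..n}. (ip (msk i) (y i) + ip (sel \<beta> (X0 i) (X1 i)) (y i) - ip (sel (\<not>\<beta>) (X0 i) (X1 i)) (y i)))
       = (\<Sum>i\<in>{1..n}. ip (msk i) (y i)) + sel \<beta> (\<Sum>i\<in>{1..n}. ip (X0 i) (y i)) (\<Sum>i\<in>{1..n}. ip (X1 i) (y i))
          - sel (\<not>\<beta>) (\<Sum>i\<in>{1..n}. ip (X0 i) (y i)) (\<Sum>i\<in>{1..n}. ip (X1 i) (y i))"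
      by (cases \<beta>) (simp_all add: sel_def sum.distrib sum_subtractf)
    finally have A: "(\<Sum>i\<in>{1..n}. ip (?M i) (y i)) mod q = ((\<Sum>i\<in>{1..n}. ip (msk i) (y i)) + sel \<beta> (\<Sum>i\<in>{1..n}. ip (X0 i) (y i)) (\<Sum>i\<in>{1..n}. ip (X1 i) (y i))
          - sel (\<not>\<beta>) (\<Sum>i\<in>{1..n}. ip (X0 i) (y i)) (\<Sum>i\<in>{1..n}. ip (X1 i) (y i))) mod q" .
    have eq': "((\<Sum>i\<in>{1..n}. ip (X0 i) (y i)) mod q + d0) mod q = ((\<Sum>i\<in>{1..n}. ip (X1 i) (y i)) mod q + d1) mod q"
      using eq unfolding fy_def X0_def X1_def .
    show "KeyGenPt q n ?M y (sel (\<not>\<beta>) d0 d1) = KeyGenPt q n msk y (sel \<beta> d0 d1)"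
      unfolding KeyGenPt_def
    proof (cases \<beta>)
      case True
      then show "((\<Sum>i\<in>{1..n}. ip (?M i) (y i)) - sel (\<not>\<beta>) d0 d1) mod q = ((\<Sum>i\<in>{1..n}. ip (msk i) (y i)) - sel \<beta> d0 d1) mod q"
        using arith_key[OF _ eq'[symmetric]] A by (simp add: sel_def)
    next
      case False
      then show "((\<Sum>i\<in>{1..n}. ip (?M i) (y i)) - sel (\<not>\<beta>) d0 d1) mod q = ((\<Sum>i\<in>{1..n}. ip (msk i) (y i)) - sel \<beta> d0 d1) mod q"
        using arith_key[OF _ eq'] A by (simp add: sel_def)
    qed
  qed
qed

definition G :: "int \<Rightarrow> nat \<Rightarrow> nat \<Rightarrow> bool \<Rightarrow> adv \<Rightarrow> (nat \<Rightarrow> int list) \<Rightarrow> bool" where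
  "G q m n \<beta> a msk = (let (b, E, K, ok) = run q m n msk \<beta> (\<lambda>_. None) [] True a in admissible q n E K ok \<and> b)"

lemma G_iff: "G q m n \<beta> a msk \<longleftrightarrow> (\<exists>b Ef Kf okf. run q m n msk \<beta> (\<lambda>_. None) [] True a = (b, Ef, Kf, okf) \<and> admissible q n Ef Kf okf \<and> b)"
  unfolding G_def by (cases "run q m n msk \<beta> (\<lambda>_. None) [] True a") auto

lemma card_le:
  fixes q :: int and m n :: nat and S
  assumes q: "0 < q" and S_def: "S = PiE {1..n} (\<lambda>_. Zqm q m)"
  assumes fin: "finite S"
  shows "card {msk\<in>S. G q m n \<beta> a msk} \<le> card {msk\<in>S. G q m n (\<not>\<beta>) a msk}"
proof -
  define Ef where "Ef = (\<lambda>msk. fst (snd (run q m n msk \<beta> (\<lambda>_. None) [] True a)))"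
  define f where "f = (\<lambda>msk. phi q m n \<beta> (Ef msk) msk)"
  have P: "f x \<in> S \<and> run q m n (f x) (\<not>\<beta>) (\<lambda>_. None) [] True a = run q m n x \<beta> (\<lambda>_. None) [] True a
           \<and> phi q m n (\<not>\<beta>) (Ef x) (f x) = x \<and> G q m n (\<not>\<beta>) a (f x)"
    if x: "x \<in> {msk\<in>S. G q m n \<beta> a msk}" for x
  proof -
    from x obtain b E K ok where r: "run q m n x \<beta> (\<lambda>_. None) [] True a = (b, E, K, ok)"
      and adm: "admissible q n E K ok" and b: b by (auto simp: G_iff)
    have E: "Ef x = E" using r by (simp add: Ef_def)
    from key[OF q _ r adm] x have k: "phi q m n \<beta> E x \<in> S"
      "run q m n (phi q m n \<beta> E x) (\<not> \<beta>) (\<lambda>_. None) [] True a = (b, E, K, ok)"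
      "phi q m n (\<not> \<beta>) E (phi q m n \<beta> E x) = x" by (auto simp: S_def)
    show ?thesis using k r adm b unfolding f_def E by (auto simp: G_iff)
  qed
  have "inj_on f {msk\<in>S. G q m n \<beta> a msk}"
  proof (rule inj_onI)
    fix x y assume x: "x \<in> {msk\<in>S. G q m n \<beta> a msk}" and y: "y \<in> {msk\<in>S. G q m n \<beta> a msk}" and e: "f x = f y"
    have "Ef x = Ef y" using P[OF x] P[OF y] e by (simp add: Ef_def)
    thus "x = y" using P[OF x] P[OF y] e by metis
  qed
  moreover have "f ` {msk\<in>S. G q m n \<beta> a msk} \<subseteq> {msk\<in>S. G q m n (\<not>\<beta>) a msk}" using P by auto
  ultimately show ?thesis by (rule card_inj_on_le) (use fin in auto)
qed

lemma inner_eq: "(Setup q m n \<bind> (\<lambda>msk. let (b, E, K, ok) = run q m n msk \<beta> (\<lambda>_. None) [] True a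
        in return_pmf (admissible q n E K ok \<and> b))) = map_pmf (G q m n \<beta> a) (Setup q m n)"
  unfolding map_pmf_def G_def by (rule bind_pmf_cong) (auto split: prod.splits)

theorem theorem1:
  fixes q :: int and m n :: nat and A :: "adv pmf"
  assumes "0 < q"
  shows "Adv_IND q m n A = 0"
proof -
  define S where "S = PiE {1..n} (\<lambda>_. Zqm q m)"
  have fZ: "finite (Zqm q m)"
    unfolding Zqm_def Zq_def using finite_lists_length_eq[of "{0..<q}" m] by (simp add: conj_commute)
  have fin: "finite S" unfolding S_def using fZ by (simp add: finite_PiE)
  have "replicate m 0 \<in> Zqm q m" using assms by (simp add: Zqm_iff)
  hence ne: "S \<noteq> {}" unfolding S_def by (auto simp: PiE_eq_empty_iff)
  have ceq: "card {msk\<in>S. G q m n False a msk} = card {msk\<in>S. G q m n True a msk}" for a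
    using card_le[OF assms S_def fin, of False a] card_le[OF assms S_def fin, of True a] by simp
  have meq: "map_pmf (G q m n False a) (Setup q m n) = map_pmf (G q m n True a) (Setup q m n)" for a
  proof (rule pmf_eqI)
    fix c :: bool
    have sub: "{msk\<in>S. G q m n \<beta> a msk} \<subseteq> S" for \<beta> by auto
    have "S \<inter> G q m n \<beta> a -` {c} = (if c then {msk\<in>S. G q m n \<beta> a msk} else S - {msk\<in>S. G q m n \<beta> a msk})" for \<beta>
      by auto
    hence cs: "card (S \<inter> G q m n \<beta> a -` {c}) = (if c then card {msk\<in>S. G q m n \<beta> a msk} else card S - card {msk\<in>S. G q m n \<beta> a msk})" for \<beta>
      using card_Diff_subset[OF finite_subset[OF sub fin] sub] by simp
    show "pmf (map_pmf (G q m n False a) (Setup q m n)) c = pmf (map_pmf (G q m n True a) (Setup q m n)) c"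
      unfolding pmf_map Setup_def S_def[symmetric] measure_pmf_of_set[OF ne fin] cs ceq by simp
  qed
  have "IND q m n False A = IND q m n True A"
    unfolding IND_def inner_eq meq ..
  thus ?thesis unfolding Adv_IND_def by simp
qed

end
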